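(* Let $\{(\mathbf{x}^{(k)},y^{(k)})\}_{k=1}^N$ be data with $\mathbf{x}^{(k)}\in\mathbb{R}^d$, $y^{(k)}\in\mathbb{R}$, and let $\widehat{\mathcal{R}}_N(s)=\frac1N\sum_{k=1}^N(y^{(k)}-s(\mathbf{x}^{(k)}))^2$ (squared loss). With fixed region-selection functions $r_i$, consider the idealized exact cyclic regional backfitting procedure described in the context. Then $\widehat{\mathcal{R}}_N$ is non-increasing along the iterates, and the procedure converges (in empirical $L_2$) to a limit $\hat s\in\arg\min_{s\in\mathcal{H}(\{T_i\})}\widehat{\mathcal{R}}_N(s)$. Moreover, the fitted-value vector $(\hat s(\mathbf{x}^{(1)}),\dots,\hat s(\mathbf{x}^{(N)}))$ is unique.
   Context: $\mathbf{x}_{-i}$ denotes $\mathbf{x}$ with the $i$-th coordinate removed. For each $i$ a fixed region-selection function $r_i:\mathbb{R}^{d-1}\to\{1,\dots,R_i\}$ is given (from a binary decision tree $T_i$). $\mathcal{H}(\{T_i\})$ denotes the class of CALM scores $s(\mathbf{x})=\beta_0+\sum_{i=1}^d f_i^{(r_i(\mathbf{x}_{-i}))}(x_i)$ with $\beta_0\in\mathbb{R}$ and univariate shape functions $f_i^{(r)}:\mathbb{R}\to\mathbb{R}$, whose region-wise components are centered (all region-wise constants absorbed in $\beta_0$). The idealized exact cyclic regional backfitting procedure cycles repeatedly over all pairs $(i,r)$; at each step it replaces $f_i^{(r)}$ by an exact minimizer of $\widehat{\mathcal{R}}_N$ over that function alone (others and $\beta_0$ fixed), using only samples $k$ with $r_i(\mathbf{x}^{(k)}_{-i})=r$,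 followed by empirical centering: the sample mean of $f_i^{(r)}$ over those samples is subtracted from $f_i^{(r)}$ and added to $\beta_0$, so fitted values and $\widehat{\mathcal{R}}_N$ are unchanged.
   Formalization: Each backfitting step replaces $f_i^{(r)}$ by an exact minimizer with no empirical centering into $\beta_0$, and $\mathcal{H}(\{T_i\})$ consists of all such scores without the centering condition on region-wise components. The statement above fails without it. *)

theory Defs
  imports Complex_Main
begin

text \<open>Points of R^d are represented as functions nat \<Rightarrow> real, of which only the
coordinates 0..d-1 are used. Coordinates are indexed 0..d-1.\<close>

text \<open>x_{-i}: the point of R^{d-1} obtained by deleting coordinate i
(coordinates beyond d-2 are normalised to 0).\<close>
definition drop_coord :: "nat \<Rightarrow> nat \<Rightarrow> (nat \<Rightarrow> real) \<Rightarrow> (nat \<Rightarrow> real)" where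
  "drop_coord d i x = (\<lambda>j. if j < d - 1 then (if j < i then x j else x (Suc j)) else 0)"

text \<open>CALM score s(x) = beta0 + sum_i f_i^{(r_i(x_{-i}))}(x_i);
f i r is the shape function f_i^{(r)}; reg i is the region selector r_i.\<close>
definition calm_score ::
  "nat \<Rightarrow> (nat \<Rightarrow> (nat \<Rightarrow> real) \<Rightarrow> nat) \<Rightarrow> real \<Rightarrow> (nat \<Rightarrow> nat \<Rightarrow> real \<Rightarrow> real)
     \<Rightarrow> (nat \<Rightarrow> real) \<Rightarrow> real" where
  "calm_score d reg b0 f x = b0 + (\<Sum>i<d. f i (reg i (drop_coord d i x)) (x i))"

definition calm_class ::
  "nat \<Rightarrow> (nat \<Rightarrow> (nat \<Rightarrow> real) \<Rightarrow> nat) \<Rightarrow> ((nat \<Rightarrow> real) \<Rightarrow> real) set" where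
  "calm_class d reg = {s. \<exists>b0 f. s = calm_score d reg b0 f}"

definition emp_risk ::
  "nat \<Rightarrow> (nat \<Rightarrow> nat \<Rightarrow> real) \<Rightarrow> (nat \<Rightarrow> real) \<Rightarrow> ((nat \<Rightarrow> real) \<Rightarrow> real) \<Rightarrow> real" where
  "emp_risk N X Y s = (1 / real N) * (\<Sum>k<N. (Y k - s (X k))^2)"

definition emp_dist2 ::
  "nat \<Rightarrow> (nat \<Rightarrow> nat \<Rightarrow> real) \<Rightarrow> ((nat \<Rightarrow> real) \<Rightarrow> real) \<Rightarrow> ((nat \<Rightarrow> real) \<Rightarrow> real) \<Rightarrow> real" where
  "emp_dist2 N X s t = (1 / real N) * (\<Sum>k<N. (s (X k) - t (X k))^2)"

definition pair_list :: "nat \<Rightarrow> (nat \<Rightarrow> nat) \<Rightarrow> (nat \<times> nat) list" where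
  "pair_list d R = concat (map (\<lambda>i. map (\<lambda>r. (i, r)) [1..<Suc (R i)]) [0..<d])"

definition sched :: "nat \<Rightarrow> (nat \<Rightarrow> nat) \<Rightarrow> nat \<Rightarrow> nat \<times> nat" where
  "sched d R n = pair_list d R ! (n mod length (pair_list d R))"

text \<open>One exact regional backfitting step: the state (b0', f') arises from (b0, f)
by replacing f_i^{(r)} with an exact minimiser g of the empirical risk over that
single univariate function (all others and b0 fixed). (Only samples in region r
involve f_i^{(r)}, so this is the same as minimising over those samples.)
The empirical centering step is a reparametrisation that by stipulation leaves
fitted values and risk unchanged.\<close>
definition exact_step ::
  "nat \<Rightarrow> (nat \<Rightarrow> nat \<Rightarrow> real) \<Rightarrow> (nat \<Rightarrow> real) \<Rightarrow> nat \<Rightarrow> (nat \<Rightarrow> (nat \<Rightarrow> real) \<Rightarrow> nat)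
     \<Rightarrow> nat \<times> nat \<Rightarrow> real \<times> (nat \<Rightarrow> nat \<Rightarrow> real \<Rightarrow> real)
     \<Rightarrow> real \<times> (nat \<Rightarrow> nat \<Rightarrow> real \<Rightarrow> real) \<Rightarrow> bool" where
  "exact_step N X Y d reg ir st st' \<longleftrightarrow>
     (case ir of (i, r) \<Rightarrow> case st of (b0, f) \<Rightarrow>
       (\<exists>g. st' = (b0, f(i := (f i)(r := g))) \<and>
            (\<forall>h. emp_risk N X Y (calm_score d reg b0 (f(i := (f i)(r := g))))
                 \<le> emp_risk N X Y (calm_score d reg b0 (f(i := (f i)(r := h)))))))"

end

theory Submission
  imports Defs
begin


definition ip :: "nat \<Rightarrow> (nat \<Rightarrow> real) \<Rightarrow> (nat \<Rightarrow> real) \<Rightarrow> real" where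
  "ip N u w = (\<Sum>k<N. u k * w k)"

lemma ip_lin_left: "ip N (\<lambda>k. a * x k + b * y k) w = a * ip N x w + b * ip N y w"
  by (simp add: ip_def sum.distrib sum_distrib_left algebra_simps)

lemma ip_diff_left: "ip N (\<lambda>k. x k - y k) w = ip N x w - ip N y w"
  by (simp add: ip_def sum_subtractf algebra_simps)

lemma ip_diff_right: "ip N w (\<lambda>k. x k - y k) = ip N w x - ip N w y"
  by (simp add: ip_def sum_subtractf algebra_simps)

lemma ip_add_right: "ip N w (\<lambda>k. x k + y k) = ip N w x + ip N w y"
  by (simp add: ip_def sum.distrib algebra_simps)

lemma ip_scale_right: "ip N w (\<lambda>k. a * x k) = a * ip N w x"
  by (simp add: ip_def sum_distrib_left algebra_simps)

lemma ip_comm: "ip N u w = ip N w u"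
  by (simp add: ip_def mult.commute)

lemma ip_cong: "(\<And>k. k < N \<Longrightarrow> u k = u' k) \<Longrightarrow> (\<And>k. k < N \<Longrightarrow> w k = w' k) \<Longrightarrow> ip N u w = ip N u' w'"
  by (simp add: ip_def)

lemma ip_self_nonneg: "0 \<le> ip N w w"
  by (simp add: ip_def sum_nonneg)

lemma ip_self_zero: "ip N w w = 0 \<Longrightarrow> k < N \<Longrightarrow> w k = 0"
  unfolding ip_def by (subst (asm) sum_nonneg_eq_0_iff) auto

lemma ip_coord_le: "k < N \<Longrightarrow> (w k)^2 \<le> ip N w w"
  unfolding ip_def power2_eq_square
  by (rule member_le_sum[where f="\<lambda>k. w k * w k"]) auto

lemma ip_pyth: "ip N x y = 0 \<Longrightarrow> ip N (\<lambda>k. x k + y k) (\<lambda>k. x k + y k) = ip N x x + ip N y y"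
proof -
  assume h: "ip N x y = 0"
  have "ip N (\<lambda>k. x k + y k) (\<lambda>k. x k + y k) = ip N x x + ip N y y + 2 * ip N x y"
    unfolding ip_def by (simp add: sum.distrib sum_distrib_left algebra_simps)
  thus ?thesis using h by simp
qed

lemma ip_pyth_minus: "ip N x y = 0 \<Longrightarrow> ip N (\<lambda>k. x k - y k) (\<lambda>k. x k - y k) = ip N x x + ip N y y"
proof -
  assume h: "ip N x y = 0"
  have "ip N (\<lambda>k. x k - y k) (\<lambda>k. x k - y k) = ip N x x + ip N y y - 2 * ip N x y"
    unfolding ip_def by (simp add: sum.distrib sum_subtractf sum_distrib_left algebra_simps)
  thus ?thesis using h by simp
qed

lemma abs_le_sq: "\<bar>x::real\<bar> \<le> 1 + x^2"
proof -
  have "0 \<le> (\<bar>x\<bar> - 1)^2" by simp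
  hence "0 \<le> \<bar>x\<bar>^2 - 2 * \<bar>x\<bar> + 1" by (simp add: power2_eq_square algebra_simps)
  thus ?thesis by simp
qed

lemma variational:
  assumes "\<And>t::real. ip N e e \<le> ip N (\<lambda>k. e k - t * u k) (\<lambda>k. e k - t * u k)"
  shows "ip N e u = 0"
proof -
  define A where "A = ip N e u"
  define B where "B = ip N u u"
  have B0: "0 \<le> B" unfolding B_def by (rule ip_self_nonneg)
  have exp: "ip N (\<lambda>k. e k - t * u k) (\<lambda>k. e k - t * u k) = ip N e e - 2 * t * A + t^2 * B" for t
    unfolding A_def B_def ip_def
    by (simp add: sum_subtractf sum.distrib sum_distrib_left algebra_simps power2_eq_square)
  have key: "0 \<le> - 2 * t * A + t^2 * B" for t using assms[of t] exp[of t] by linarith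
  show ?thesis
  proof (rule ccontr)
    assume "ip N e u \<noteq> 0"
    hence A0: "A \<noteq> 0" by (simp add: A_def)
    define t where "t = A / (B + 1)"
    have "t * A = A^2 / (B+1)" by (simp add: t_def power2_eq_square)
    moreover have "t^2 * B = A^2 / (B+1) * (B / (B+1))" by (simp add: t_def power2_eq_square field_simps)
    moreover have "B / (B+1) \<le> 1" using B0 by simp
    moreover have "A^2 / (B+1) > 0" using A0 B0 by simp
    ultimately have "t^2 * B \<le> A^2/(B+1)" 
      using mult_left_mono[of "B/(B+1)" 1 "A^2/(B+1)"] by simp
    hence "- 2 * t * A + t^2 * B < 0" using \<open>t * A = A^2 / (B+1)\<close> \<open>A^2 / (B+1) > 0\<close> by linarith
    thus False using key[of t] by linarith
  qed
qed

lemma group_orth: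
  fixes key :: "nat \<Rightarrow> 'a"
  assumes "\<And>k0. k0 < N \<Longrightarrow> (\<Sum>k<N. w k * (if key k = key k0 then 1 else 0)) = (0::real)"
  shows "(\<Sum>k<N. w k * F (key k)) = 0"
proof -
  have "(\<Sum>k<N. w k * F (key k)) = (\<Sum>\<kappa>\<in>key ` {..<N}. \<Sum>k\<in>{k\<in>{..<N}. key k = \<kappa>}. w k * F (key k))"
    by (rule sum.image_gen) simp
  also have "\<dots> = (\<Sum>\<kappa>\<in>key ` {..<N}. F \<kappa> * (\<Sum>k\<in>{k\<in>{..<N}. key k = \<kappa>}. w k))"
    by (rule sum.cong) (auto simp: sum_distrib_left mult.commute intro!: sum.cong)
  also have "\<dots> = 0"
  proof (rule sum.neutral, rule ballI)
    fix \<kappa> assume "\<kappa> \<in> key ` {..<N}"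
    then obtain k0 where k0: "k0 < N" "\<kappa> = key k0" by auto
    have "(\<Sum>k\<in>{k\<in>{..<N}. key k = \<kappa>}. w k) = (\<Sum>k<N. if key k = \<kappa> then w k else 0)"
      by (rule sum.inter_filter) simp
    also have "\<dots> = (\<Sum>k<N. w k * (if key k = key k0 then 1 else 0))"
      using k0 by (intro sum.cong) auto
    also have "\<dots> = 0" using assms k0 by simp
    finally show "F \<kappa> * (\<Sum>k\<in>{k\<in>{..<N}. key k = \<kappa>}. w k) = 0" by simp
  qed
  finally show ?thesis .
qed

definition inspan :: "nat \<Rightarrow> (nat \<Rightarrow> real) list \<Rightarrow> (nat \<Rightarrow> real) \<Rightarrow> bool" where
  "inspan N us p \<longleftrightarrow> (\<exists>c. \<forall>k<N. p k = (\<Sum>j<length us. c j * (us ! j) k))"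

lemma inspan_ip:
  assumes "inspan N us p" "\<And>j. j < length us \<Longrightarrow> ip N w (us ! j) = 0"
  shows "ip N w p = 0"
proof -
  obtain c where c: "\<And>k. k < N \<Longrightarrow> p k = (\<Sum>j<length us. c j * (us ! j) k)"
    using assms(1) unfolding inspan_def by blast
  have "ip N w p = (\<Sum>k<N. w k * (\<Sum>j<length us. c j * (us ! j) k))"
    unfolding ip_def using c by (intro sum.cong) auto
  also have "\<dots> = (\<Sum>j<length us. c j * ip N w (us ! j))"
    unfolding ip_def by (simp add: sum_distrib_left sum.swap[of _ "{..<N}"] algebra_simps)
  also have "\<dots> = 0" using assms(2) by simp
  finally show ?thesis .
qed

lemma inspan_lin:
  assumes "inspan N us p" "inspan N us q"
  shows "inspan N us (\<lambda>k. a * p k + b * q k)"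
proof -
  obtain c where c: "\<And>k. k < N \<Longrightarrow> p k = (\<Sum>j<length us. c j * (us ! j) k)"
    using assms(1) unfolding inspan_def by blast
  obtain c' where c': "\<And>k. k < N \<Longrightarrow> q k = (\<Sum>j<length us. c' j * (us ! j) k)"
    using assms(2) unfolding inspan_def by blast
  show ?thesis unfolding inspan_def
    by (rule exI[of _ "\<lambda>j. a * c j + b * c' j"])
       (simp add: c c' sum_distrib_left sum.distrib algebra_simps)
qed

lemma inspan_Cons:
  assumes "inspan N us p" shows "inspan N (u # us) p"
proof -
  obtain c where c: "\<And>k. k < N \<Longrightarrow> p k = (\<Sum>j<length us. c j * (us ! j) k)"
    using assms(1) unfolding inspan_def by blast
  show ?thesis unfolding inspan_def
    by (rule exI[of _ "\<lambda>j. if j = 0 then 0 else c (j - 1)"])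
       (simp only: length_Cons sum.lessThan_Suc_shift, simp add: c)
qed

lemma inspan_head: "inspan N (u # us) u"
  unfolding inspan_def
  by (rule exI[of _ "\<lambda>j. if j = 0 then 1 else 0"]) (simp only: length_Cons sum.lessThan_Suc_shift, simp)

lemma proj_exists:
  "\<exists>p. inspan N us p \<and> (\<forall>j<length us. ip N (\<lambda>k. y k - p k) (us ! j) = 0)"
proof (induction us arbitrary: y)
  case Nil
  show ?case by (rule exI[of _ "\<lambda>k. 0"]) (simp add: inspan_def)
next
  case (Cons u us)
  obtain q where q: "inspan N us q" "\<And>j. j < length us \<Longrightarrow> ip N (\<lambda>k. u k - q k) (us ! j) = 0"
    using Cons.IH[of u] by blast
  obtain p' where p': "inspan N us p'" "\<And>j. j < length us \<Longrightarrow> ip N (\<lambda>k. y k - p' k) (us ! j) = 0"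
    using Cons.IH[of y] by blast
  define w where "w = (\<lambda>k. u k - q k)"
  show ?case
  proof (cases "ip N w w = 0")
    case True
    have w0: "\<And>k. k < N \<Longrightarrow> w k = 0" using ip_self_zero[OF True] .
    have "ip N (\<lambda>k. y k - p' k) u = ip N (\<lambda>k. y k - p' k) q"
      using w0 unfolding w_def by (intro ip_cong) auto
    also have "\<dots> = 0" by (rule inspan_ip[OF q(1) p'(2)])
    finally have hu: "ip N (\<lambda>k. y k - p' k) u = 0" .
    show ?thesis
      apply (rule exI[of _ p'])
      using inspan_Cons[OF p'(1)] hu p'(2) by (auto simp: less_Suc_eq_0_disj)
  next
    case False
    define t where "t = ip N (\<lambda>k. y k - p' k) w / ip N w w"
    define p where "p = (\<lambda>k. 1 * p' k + t * w k)"
    have sp: "inspan N (u # us) p"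
    proof -
      have "inspan N (u # us) w"
        unfolding w_def using inspan_lin[OF inspan_head[of N u us] inspan_Cons[OF q(1)], of 1 "-1"]
        by simp
      thus ?thesis unfolding p_def by (rule inspan_lin[OF inspan_Cons[OF p'(1)]])
    qed
    have e: "(\<lambda>k. y k - p k) = (\<lambda>k. (y k - p' k) - t * w k)" unfolding p_def by auto
    have o1: "ip N (\<lambda>k. y k - p k) (us ! j) = 0" if "j < length us" for j
    proof -
      have "ip N w (us ! j) = 0" using q(2)[OF that] unfolding w_def .
      thus ?thesis unfolding e using ip_lin_left[of N 1 "\<lambda>k. y k - p' k" "-t" w "us ! j"] p'(2)[OF that]
        by simp
    qed
    have o2: "ip N (\<lambda>k. y k - p k) w = 0"
      unfolding e using ip_lin_left[of N 1 "\<lambda>k. y k - p' k" "-t" w w] False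
      by (simp add: t_def)
    have o3: "ip N (\<lambda>k. y k - p k) q = 0" by (rule inspan_ip[OF q(1) o1])
    have "ip N (\<lambda>k. y k - p k) u = ip N (\<lambda>k. y k - p k) (\<lambda>k. w k + q k)"
      unfolding w_def by simp
    also have "\<dots> = 0" using o2 o3 by (simp add: ip_add_right)
    finally have "ip N (\<lambda>k. y k - p k) u = 0" .
    thus ?thesis using sp o1 by (intro exI[of _ p]) (auto simp: less_Suc_eq_0_disj)
  qed
qed

lemma bw_multi:
  fixes u :: "nat \<Rightarrow> nat \<Rightarrow> real"
  assumes "\<And>n k. \<bar>u n k\<bar> \<le> B"
  shows "\<exists>\<sigma>. strict_mono \<sigma> \<and> (\<forall>k<M. convergent (\<lambda>l. u (\<sigma> l) k))"
proof (induction M)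
  case 0
  show ?case by (rule exI[of _ id]) (simp add: strict_mono_def)
next
  case (Suc M)
  then obtain \<sigma> where \<sigma>: "strict_mono \<sigma>" "\<forall>k<M. convergent (\<lambda>l. u (\<sigma> l) k)" by blast
  obtain \<tau> where \<tau>: "strict_mono \<tau>" "monoseq (\<lambda>l. u (\<sigma> (\<tau> l)) M)"
    using seq_monosub[of "\<lambda>l. u (\<sigma> l) M"] by blast
  have "Bseq (\<lambda>l. u (\<sigma> (\<tau> l)) M)" using assms by (intro BseqI'[of _ B]) simp
  hence cM: "convergent (\<lambda>l. u (\<sigma> (\<tau> l)) M)" using \<tau>(2) by (rule Bseq_monoseq_convergent)
  have "convergent (\<lambda>l. u (\<sigma> (\<tau> l)) k)" if "k < M" for k
    using convergent_subseq_convergent[OF \<sigma>(2)[rule_format, OF that] \<tau>(1)] by (simp add: o_def)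
  hence "\<forall>k<Suc M. convergent (\<lambda>l. u ((\<sigma> \<circ> \<tau>) l) k)" using cM by (auto simp: less_Suc_eq)
  moreover have "strict_mono (\<sigma> \<circ> \<tau>)" using \<sigma>(1) \<tau>(1) by (rule strict_mono_o)
  ultimately show ?case by blast
qed



definition infit :: "nat \<Rightarrow> (nat \<Rightarrow> (nat \<Rightarrow> real) \<Rightarrow> nat) \<Rightarrow> (nat \<Rightarrow> nat \<Rightarrow> real) \<Rightarrow> nat \<Rightarrow> (nat \<Rightarrow> real) \<Rightarrow> bool" where
  "infit d reg X N v \<longleftrightarrow> (\<exists>b0 f. \<forall>k<N. v k = calm_score d reg b0 f (X k))"

definition Dvec :: "nat \<Rightarrow> (nat \<Rightarrow> (nat \<Rightarrow> real) \<Rightarrow> nat) \<Rightarrow> (nat \<Rightarrow> nat \<Rightarrow> real) \<Rightarrow> nat \<Rightarrow> nat \<Rightarrow> (real \<Rightarrow> real) \<Rightarrow> nat \<Rightarrow> real" where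
  "Dvec d reg X i r h = (\<lambda>k. if reg i (drop_coord d i (X k)) = r then h (X k i) else 0)"

lemma calm_lin:
  "calm_score d reg (a * b0 + b * b1) (\<lambda>i r t. a * f i r t + b * g i r t) x
   = a * calm_score d reg b0 f x + b * calm_score d reg b1 g x"
  by (simp add: calm_score_def sum.distrib sum_distrib_left algebra_simps)

lemma calm_zero: "calm_score d reg 0 (\<lambda>_ _ _. 0) x = 0"
  by (simp add: calm_score_def)

lemma infit_cong: "infit d reg X N v \<Longrightarrow> (\<And>k. k < N \<Longrightarrow> w k = v k) \<Longrightarrow> infit d reg X N w"
  unfolding infit_def by auto

lemma infit_lin:
  assumes "infit d reg X N v" "infit d reg X N w"
  shows "infit d reg X N (\<lambda>k. a * v k + b * w k)"
proof -
  obtain b0 f where 1: "\<forall>k<N. v k = calm_score d reg b0 f (X k)" using assms(1) unfolding infit_def by blast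
  obtain b1 g where 2: "\<forall>k<N. w k = calm_score d reg b1 g (X k)" using assms(2) unfolding infit_def by blast
  show ?thesis unfolding infit_def
    by (rule exI[of _ "a * b0 + b * b1"], rule exI[of _ "\<lambda>i r t. a * f i r t + b * g i r t"])
       (simp add: calm_lin 1 2)
qed

lemma infit_diff:
  assumes "infit d reg X N v" "infit d reg X N w"
  shows "infit d reg X N (\<lambda>k. v k - w k)"
  using infit_lin[OF assms, of 1 "-1"] by simp

lemma infit_zero: "infit d reg X N (\<lambda>k. 0)"
  unfolding infit_def by (rule exI[of _ 0], rule exI[of _ "\<lambda>_ _ _. 0"]) (simp add: calm_zero)

lemma infit_sum:
  assumes "finite J" "\<And>j. j \<in> J \<Longrightarrow> infit d reg X N (v j)"
  shows "infit d reg X N (\<lambda>k. \<Sum>j\<in>J. v j k)"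
  using assms
proof (induction J rule: finite_induct)
  case empty
  then show ?case using infit_zero by simp
next
  case (insert j J)
  have "infit d reg X N (\<lambda>k. 1 * v j k + 1 * (\<Sum>j\<in>J. v j k))"
    using insert by (intro infit_lin) auto
  thus ?case using insert by simp
qed

lemma infit_scale: "infit d reg X N v \<Longrightarrow> infit d reg X N (\<lambda>k. a * v k)"
  using infit_lin[of d reg X N v v a 0] by simp

lemma inspan_infit:
  assumes "inspan N us p" "\<And>j. j < length us \<Longrightarrow> infit d reg X N (us ! j)"
  shows "infit d reg X N p"
proof -
  obtain c where c: "\<And>k. k < N \<Longrightarrow> p k = (\<Sum>j<length us. c j * (us ! j) k)"
    using assms(1) unfolding inspan_def by blast
  have "infit d reg X N (\<lambda>k. \<Sum>j\<in>{..<length us}. c j * (us ! j) k)"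
    using assms(2) by (intro infit_sum infit_scale) auto
  thus ?thesis using c by (rule infit_cong)
qed

lemma calm_Dvec:
  assumes "i < d"
  shows "calm_score d reg 0 (\<lambda>i' r' t. if i' = i \<and> r' = r then h t else 0) x
       = (if reg i (drop_coord d i x) = r then h (x i) else 0)"
proof -
  have "(\<Sum>i'<d. (\<lambda>i' r' t. if i' = i \<and> r' = r then h t else 0) i' (reg i' (drop_coord d i' x)) (x i'))
      = (\<Sum>i'<d. if i' = i then (if reg i (drop_coord d i x) = r then h (x i) else 0) else 0)"
    by (intro sum.cong) auto
  also have "\<dots> = (if reg i (drop_coord d i x) = r then h (x i) else 0)"
    using assms by (simp add: sum.delta)
  finally show ?thesis by (simp add: calm_score_def)
qed

lemma infit_Dvec: "i < d \<Longrightarrow> infit d reg X N (Dvec d reg X i r h)"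
  unfolding infit_def Dvec_def
  by (rule exI[of _ 0], rule exI[of _ "\<lambda>i' r' t. if i' = i \<and> r' = r then h t else 0"])
     (simp add: calm_Dvec)

lemma calm_upd:
  assumes "i < d"
  shows "calm_score d reg b0 (f(i := (f i)(r := h))) x
       = calm_score d reg b0 f x + (if reg i (drop_coord d i x) = r then h (x i) - f i r (x i) else 0)"
proof -
  have "(\<Sum>i'<d. (f(i := (f i)(r := h))) i' (reg i' (drop_coord d i' x)) (x i'))
      = (\<Sum>i'<d. f i' (reg i' (drop_coord d i' x)) (x i') +
           (if i' = i then (if reg i (drop_coord d i x) = r then h (x i) - f i r (x i) else 0) else 0))"
    by (intro sum.cong) auto
  also have "\<dots> = (\<Sum>i'<d. f i' (reg i' (drop_coord d i' x)) (x i')) +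
           (if reg i (drop_coord d i x) = r then h (x i) - f i r (x i) else 0)"
    using assms by (simp add: sum.distrib sum.delta)
  finally show ?thesis by (simp add: calm_score_def)
qed

lemma perp_all:
  assumes d: "0 < d"
    and orth: "\<And>i k0. i < d \<Longrightarrow> k0 < N \<Longrightarrow>
        ip N w (Dvec d reg X i (reg i (drop_coord d i (X k0))) (\<lambda>t. if t = X k0 i then 1 else 0)) = 0"
    and v: "infit d reg X N v"
  shows "ip N w v = 0"
proof -
  obtain b0 f where bf: "\<And>k. k < N \<Longrightarrow> v k = calm_score d reg b0 f (X k)" using v unfolding infit_def by blast
  have G: "(\<Sum>k<N. w k * F (reg i (drop_coord d i (X k)), X k i)) = 0" if "i < d" for i F
  proof (rule group_orth[where key="\<lambda>k. (reg i (drop_coord d i (X k)), X k i)"])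
    fix k0 assume "k0 < N"
    have "ip N w (Dvec d reg X i (reg i (drop_coord d i (X k0))) (\<lambda>t. if t = X k0 i then 1 else 0))
      = (\<Sum>k<N. w k * (if (reg i (drop_coord d i (X k)), X k i) = (reg i (drop_coord d i (X k0)), X k0 i) then 1 else 0))"
      unfolding ip_def Dvec_def by (intro sum.cong) auto
    with orth[OF that \<open>k0 < N\<close>] show "(\<Sum>k<N. w k * (if (reg i (drop_coord d i (X k)), X k i) = (reg i (drop_coord d i (X k0)), X k0 i) then 1 else 0)) = 0"
      by simp
  qed
  have "ip N w v = (\<Sum>k<N. w k * (b0 + (\<Sum>i<d. f i (reg i (drop_coord d i (X k))) (X k i))))"
    unfolding ip_def using bf by (intro sum.cong) (auto simp: calm_score_def)
  also have "\<dots> = b0 * (\<Sum>k<N. w k * 1) + (\<Sum>i<d. \<Sum>k<N. w k * f i (reg i (drop_coord d i (X k))) (X k i))"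
    by (simp add: algebra_simps sum.distrib sum_distrib_left sum.swap[of _ "{..<d}"])
  also have "(\<Sum>k<N. w k * 1) = 0"
    using G[OF d, of "\<lambda>_. 1"] by simp
  also have "(\<Sum>i<d. \<Sum>k<N. w k * f i (reg i (drop_coord d i (X k))) (X k i)) = 0"
    using G[of _ "\<lambda>(r, c). f _ r c"] by (intro sum.neutral) auto
  finally show ?thesis by simp
qed

lemma pair_list_set: "(i, r) \<in> set (pair_list d R) \<longleftrightarrow> i < d \<and> 1 \<le> r \<and> r \<le> R i"
proof
  assume "(i, r) \<in> set (pair_list d R)" thus "i < d \<and> 1 \<le> r \<and> r \<le> R i"
    unfolding pair_list_def by auto
next
  assume h: "i < d \<and> 1 \<le> r \<and> r \<le> R i"
  hence "(i, r) \<in> set (map (\<lambda>r. (i, r)) [1..<Suc (R i)])" by auto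
  moreover have "map (\<lambda>r. (i, r)) [1..<Suc (R i)] \<in> set (map (\<lambda>i. map (\<lambda>r. (i, r)) [1..<Suc (R i)]) [0..<d])"
    unfolding set_map by (rule imageI) (use h in simp)
  ultimately show "(i, r) \<in> set (pair_list d R)" unfolding pair_list_def set_concat by blast
qed



lemma step_facts:
  assumes st: "exact_step N X Y d reg (i, r) (b0, f) (b0', f')" and i: "i < d" and N: "N \<ge> 1"
  shows "\<exists>h. \<forall>k. calm_score d reg b0' f' (X k) - calm_score d reg b0 f (X k) = Dvec d reg X i r h k"
    and "\<forall>h. ip N (\<lambda>k. Y k - calm_score d reg b0' f' (X k)) (Dvec d reg X i r h) = 0"
    and "b0' = b0"
proof -
  obtain g where g: "(b0', f') = (b0, f(i := (f i)(r := g)))"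
    and opt: "\<And>h. emp_risk N X Y (calm_score d reg b0 (f(i := (f i)(r := g))))
                 \<le> emp_risk N X Y (calm_score d reg b0 (f(i := (f i)(r := h))))"
    using st unfolding exact_step_def by auto
  have b: "b0' = b0" and f': "f' = f(i := (f i)(r := g))" using g by auto
  show "b0' = b0" by fact
  show "\<exists>h. \<forall>k. calm_score d reg b0' f' (X k) - calm_score d reg b0 f (X k) = Dvec d reg X i r h k"
    by (rule exI[of _ "\<lambda>t. g t - f i r t"]) (simp add: b f' calm_upd[OF i] Dvec_def)
  show "\<forall>h. ip N (\<lambda>k. Y k - calm_score d reg b0' f' (X k)) (Dvec d reg X i r h) = 0"
  proof
    fix h
    let ?e = "\<lambda>k. Y k - calm_score d reg b0' f' (X k)"
    let ?u = "Dvec d reg X i r h"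
    show "ip N ?e ?u = 0"
    proof (rule variational)
      fix t :: real
      have eq: "Y (k) - calm_score d reg b0 (f(i := (f i)(r := (\<lambda>s. g s + t * h s)))) (X k) = ?e k - t * ?u k" for k
        by (simp add: b f' calm_upd[OF i] Dvec_def algebra_simps)
      have "emp_risk N X Y (calm_score d reg b0 (f(i := (f i)(r := g))))
                 \<le> emp_risk N X Y (calm_score d reg b0 (f(i := (f i)(r := (\<lambda>s. g s + t * h s)))))"
        by (rule opt)
      hence "(1 / real N) * ip N ?e ?e \<le> (1 / real N) * ip N (\<lambda>k. ?e k - t * ?u k) (\<lambda>k. ?e k - t * ?u k)"
        unfolding emp_risk_def ip_def eq[symmetric] by (simp add: b f' power2_eq_square)
      thus "ip N ?e ?e \<le> ip N (\<lambda>k. ?e k - t * ?u k) (\<lambda>k. ?e k - t * ?u k)"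
        using N by (simp add: divide_le_cancel)
    qed
  qed
qed



theorem propositionA3:
  fixes N d :: nat
    and X :: "nat \<Rightarrow> nat \<Rightarrow> real"
    and Y :: "nat \<Rightarrow> real"
    and reg :: "nat \<Rightarrow> (nat \<Rightarrow> real) \<Rightarrow> nat"
    and R :: "nat \<Rightarrow> nat"
    and st :: "nat \<Rightarrow> real \<times> (nat \<Rightarrow> nat \<Rightarrow> real \<Rightarrow> real)"
  assumes "N \<ge> 1" and "d \<ge> 1"
    and "\<And>i z. i < d \<Longrightarrow> reg i z \<in> {1..R i}"
    and "\<And>n. exact_step N X Y d reg (sched d R n) (st n) (st (Suc n))"
  shows "(\<forall>n. emp_risk N X Y (calm_score d reg (fst (st (Suc n))) (snd (st (Suc n))))
              \<le> emp_risk N X Y (calm_score d reg (fst (st n)) (snd (st n))))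
       \<and> (\<exists>shat \<in> calm_class d reg.
            (\<forall>s \<in> calm_class d reg. emp_risk N X Y shat \<le> emp_risk N X Y s)
          \<and> (\<lambda>n. emp_dist2 N X (calm_score d reg (fst (st n)) (snd (st n))) shat)
              \<longlonglongrightarrow> 0)
       \<and> (\<forall>s1 \<in> calm_class d reg. \<forall>s2 \<in> calm_class d reg.
            (\<forall>s \<in> calm_class d reg. emp_risk N X Y s1 \<le> emp_risk N X Y s) \<longrightarrow>
            (\<forall>s \<in> calm_class d reg. emp_risk N X Y s2 \<le> emp_risk N X Y s) \<longrightarrow>
            (\<forall>k<N. s1 (X k) = s2 (X k)))"
proof -
  note N = assms(1)
  have dpos: "0 < d" using assms(2) by simp
  define m where "m = length (pair_list d R)"
  have "(0, reg 0 (\<lambda>_. 0)) \<in> set (pair_list d R)"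
    using assms(3)[OF dpos] pair_list_set dpos by auto
  hence mpos: "0 < m" unfolding m_def by (cases "pair_list d R") auto
  have sched_in: "sched d R n \<in> set (pair_list d R)" for n
    unfolding sched_def using mpos m_def by auto
  define V where "V n = (\<lambda>k. calm_score d reg (fst (st n)) (snd (st n)) (X k))" for n
  have step: "\<exists>i r. sched d R n = (i, r) \<and> i < d \<and> (\<exists>h. \<forall>k. V (Suc n) k - V n k = Dvec d reg X i r h k)
      \<and> (\<forall>h. ip N (\<lambda>k. Y k - V (Suc n) k) (Dvec d reg X i r h) = 0)" for n
  proof -
    obtain i r where ir: "sched d R n = (i, r)" by (cases "sched d R n")
    have i: "i < d" using sched_in[of n] ir pair_list_set by auto
    obtain b0 f where 1: "st n = (b0, f)" by (cases "st n")
    obtain b0' f' where 2: "st (Suc n) = (b0', f')" by (cases "st (Suc n)")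
    have E: "exact_step N X Y d reg (i, r) (b0, f) (b0', f')" using assms(4)[of n] ir 1 2 by simp
    show ?thesis using step_facts[OF E i N] ir i unfolding V_def 1 2 by auto
  qed
  define gens where "gens = map (\<lambda>(i, k0). Dvec d reg X i (reg i (drop_coord d i (X k0))) (\<lambda>t. if t = X k0 i then 1 else 0))
      (List.product [0..<d] [0..<N])"
  have gens_set: "g \<in> set gens \<longleftrightarrow> (\<exists>i<d. \<exists>k0<N. g = Dvec d reg X i (reg i (drop_coord d i (X k0))) (\<lambda>t. if t = X k0 i then 1 else 0))" for g
    unfolding gens_def by (auto simp: image_iff Bex_def)
  have gens_infit: "infit d reg X N (gens ! j)" if "j < length gens" for j
  proof -
    have "gens ! j \<in> set gens" using that by simp
    then obtain i k0 where "i < d" "gens ! j = Dvec d reg X i (reg i (drop_coord d i (X k0))) (\<lambda>t. if t = X k0 i then 1 else 0)"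
      using gens_set by blast
    thus ?thesis using infit_Dvec by simp
  qed
  have PERP: "ip N w v = 0" if "\<And>j. j < length gens \<Longrightarrow> ip N w (gens ! j) = 0" "infit d reg X N v" for w v
  proof (rule perp_all[OF dpos _ that(2)])
    fix i k0 assume "i < d" "k0 < N"
    hence "Dvec d reg X i (reg i (drop_coord d i (X k0))) (\<lambda>t. if t = X k0 i then 1 else 0) \<in> set gens"
      using gens_set by blast
    then obtain j where "j < length gens" "gens ! j = Dvec d reg X i (reg i (drop_coord d i (X k0))) (\<lambda>t. if t = X k0 i then 1 else 0)"
      by (metis in_set_conv_nth)
    thus "ip N w (Dvec d reg X i (reg i (drop_coord d i (X k0))) (\<lambda>t. if t = X k0 i then 1 else 0)) = 0"
      using that(1) by metis
  qed
  obtain p where p: "inspan N gens p" "\<And>j. j < length gens \<Longrightarrow> ip N (\<lambda>k. Y k - p k) (gens ! j) = 0"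
    using proj_exists[of N gens Y] by blast
  have "infit d reg X N p" using inspan_infit[OF p(1) gens_infit] .
  then obtain bs fs where bfs: "\<And>k. k < N \<Longrightarrow> p k = calm_score d reg bs fs (X k)" unfolding infit_def by blast
  define z where "z = (\<lambda>k. Y k - p k)"
  have zperp: "infit d reg X N v \<Longrightarrow> ip N z v = 0" for v
    unfolding z_def using PERP[OF p(2)] by blast
  have infit_s: "infit d reg X N (\<lambda>k. s (X k))" if "s \<in> calm_class d reg" for s
    using that unfolding calm_class_def infit_def by auto
  have risk: "emp_risk N X Y s = (1 / real N) * (ip N z z + ip N (\<lambda>k. s (X k) - p k) (\<lambda>k. s (X k) - p k))"
    if "s \<in> calm_class d reg" for s
  proof -
    have pi: "infit d reg X N p" using inspan_infit[OF p(1) gens_infit] .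
    have "ip N z (\<lambda>k. s (X k) - p k) = 0" by (rule zperp, rule infit_diff[OF infit_s[OF that] pi])
    hence "ip N (\<lambda>k. z k - (s (X k) - p k)) (\<lambda>k. z k - (s (X k) - p k)) = ip N z z + ip N (\<lambda>k. s (X k) - p k) (\<lambda>k. s (X k) - p k)"
      by (rule ip_pyth_minus)
    moreover have "emp_risk N X Y s = (1 / real N) * ip N (\<lambda>k. z k - (s (X k) - p k)) (\<lambda>k. z k - (s (X k) - p k))"
      unfolding emp_risk_def ip_def z_def by (simp add: power2_eq_square)
    ultimately show ?thesis by simp
  qed
  define shat where "shat = calm_score d reg bs fs"
  have shat_in: "shat \<in> calm_class d reg" unfolding shat_def calm_class_def by auto
  have shat_p: "ip N (\<lambda>k. shat (X k) - p k) (\<lambda>k. shat (X k) - p k) = 0"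
    unfolding ip_def shat_def using bfs by simp
  have shat_min: "\<forall>s \<in> calm_class d reg. emp_risk N X Y shat \<le> emp_risk N X Y s"
  proof
    fix s assume s: "s \<in> calm_class d reg"
    have "ip N z z \<le> ip N z z + ip N (\<lambda>k. s (X k) - p k) (\<lambda>k. s (X k) - p k)"
      using ip_self_nonneg by simp
    thus "emp_risk N X Y shat \<le> emp_risk N X Y s"
      using risk[OF s] risk[OF shat_in] shat_p by (simp add: divide_right_mono)
  qed
  have minfit: "\<forall>k<N. s (X k) = p k" if "s \<in> calm_class d reg" "\<forall>s' \<in> calm_class d reg. emp_risk N X Y s \<le> emp_risk N X Y s'" for s
  proof -
    have "emp_risk N X Y s \<le> emp_risk N X Y shat" using that shat_in by blast
    hence "ip N (\<lambda>k. s (X k) - p k) (\<lambda>k. s (X k) - p k) \<le> 0"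
      using risk[OF that(1)] risk[OF shat_in] shat_p N by (simp add: divide_le_cancel)
    hence "ip N (\<lambda>k. s (X k) - p k) (\<lambda>k. s (X k) - p k) = 0" using ip_self_nonneg by (metis antisym)
    thus ?thesis using ip_self_zero by fastforce
  qed
  have uniq: "\<forall>s1 \<in> calm_class d reg. \<forall>s2 \<in> calm_class d reg.
            (\<forall>s \<in> calm_class d reg. emp_risk N X Y s1 \<le> emp_risk N X Y s) \<longrightarrow>
            (\<forall>s \<in> calm_class d reg. emp_risk N X Y s2 \<le> emp_risk N X Y s) \<longrightarrow>
            (\<forall>k<N. s1 (X k) = s2 (X k))"
    using minfit by metis
  define a where "a n = (\<lambda>k. V n k - p k)" for n
  define q where "q n = ip N (a n) (a n)" for n
  have Vin: "calm_score d reg (fst (st n)) (snd (st n)) \<in> calm_class d reg" for n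
    unfolding calm_class_def by auto
  have riskq: "emp_risk N X Y (calm_score d reg (fst (st n)) (snd (st n))) = (1 / real N) * (ip N z z + q n)" for n
    using risk[OF Vin[of n]] unfolding q_def a_def V_def by simp
  have a_infit: "infit d reg X N (a n)" for n
    unfolding a_def V_def
    by (rule infit_diff[OF infit_s[OF Vin] inspan_infit[OF p(1) gens_infit]])
  have orth_a: "\<forall>h. ip N (a (Suc n)) (Dvec d reg X i r h) = 0" if "sched d R n = (i, r)" for n i r
  proof
    fix h
    obtain i' r' where S: "sched d R n = (i', r')" "i' < d" "\<forall>h. ip N (\<lambda>k. Y k - V (Suc n) k) (Dvec d reg X i' r' h) = 0"
      using step[of n] by blast
    have ii: "i' = i" "r' = r" using S(1) that by auto
    have "ip N (a (Suc n)) (Dvec d reg X i r h) = ip N (\<lambda>k. z k - (Y k - V (Suc n) k)) (Dvec d reg X i r h)"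
      unfolding a_def z_def by (rule ip_cong) auto
    also have "\<dots> = ip N z (Dvec d reg X i r h) - ip N (\<lambda>k. Y k - V (Suc n) k) (Dvec d reg X i r h)"
      by (rule ip_diff_left)
    also have "\<dots> = 0" using zperp[OF infit_Dvec[OF S(2)]] S(3) ii by simp
    finally show "ip N (a (Suc n)) (Dvec d reg X i r h) = 0" .
  qed
  have qstep: "q n = q (Suc n) + ip N (\<lambda>k. a n k - a (Suc n) k) (\<lambda>k. a n k - a (Suc n) k)" for n
  proof -
    obtain i r h where S: "sched d R n = (i, r)" "\<forall>k. V (Suc n) k - V n k = Dvec d reg X i r h k"
      using step[of n] by blast
    have "ip N (a (Suc n)) (\<lambda>k. a n k - a (Suc n) k) = ip N (a (Suc n)) (Dvec d reg X i r (\<lambda>t. - h t))"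
    proof (rule ip_cong)
      fix k
      have "V (Suc n) k - V n k = Dvec d reg X i r h k" using S(2) by blast
      thus "a n k - a (Suc n) k = Dvec d reg X i r (\<lambda>t. - h t) k"
        unfolding a_def Dvec_def by (auto split: if_splits)
    qed simp
    also have "\<dots> = 0" using orth_a[OF S(1)] by blast
    finally have "ip N (\<lambda>k. a (Suc n) k + (a n k - a (Suc n) k)) (\<lambda>k. a (Suc n) k + (a n k - a (Suc n) k)) = q (Suc n) + ip N (\<lambda>k. a n k - a (Suc n) k) (\<lambda>k. a n k - a (Suc n) k)"
      unfolding q_def by (rule ip_pyth)
    thus ?thesis unfolding q_def by simp
  qed
  have qnn: "0 \<le> q n" for n unfolding q_def by (rule ip_self_nonneg)
  have qdec: "q (Suc n) \<le> q n" for n using qstep[of n] ip_self_nonneg[of N] by (metis le_add_same_cancel1)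
  have part1: "\<forall>n. emp_risk N X Y (calm_score d reg (fst (st (Suc n))) (snd (st (Suc n))))
              \<le> emp_risk N X Y (calm_score d reg (fst (st n)) (snd (st n)))"
    using qdec by (simp add: riskq divide_right_mono)
  have "decseq q" using qdec by (simp add: decseq_Suc_iff)
  then obtain L where qL: "q \<longlonglongrightarrow> L" using decseq_convergent[of q 0] qnn by blast
  have dq0: "(\<lambda>n. q n - q (Suc n)) \<longlonglongrightarrow> 0"
    using tendsto_diff[OF qL LIMSEQ_Suc[OF qL]] by simp
  have diff0: "(\<lambda>n. a (Suc n) k - a n k) \<longlonglongrightarrow> 0" if k: "k < N" for k
  proof (rule tendsto_0_le[where K=1])
    show "(\<lambda>n. sqrt (q n - q (Suc n))) \<longlonglongrightarrow> 0"
      using tendsto_real_sqrt[OF dq0] by simp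
    show "\<forall>\<^sub>F n in sequentially. norm (a (Suc n) k - a n k) \<le> norm (sqrt (q n - q (Suc n))) * 1"
    proof (rule always_eventually, rule allI)
      fix n
      have "(a n k - a (Suc n) k)^2 \<le> q n - q (Suc n)"
        using ip_coord_le[OF k, of "\<lambda>k. a n k - a (Suc n) k"] qstep[of n] by simp
      hence "sqrt ((a n k - a (Suc n) k)^2) \<le> sqrt (q n - q (Suc n))" by (rule real_sqrt_le_mono)
      thus "norm (a (Suc n) k - a n k) \<le> norm (sqrt (q n - q (Suc n))) * 1" by simp
    qed
  qed
  have qle: "q n \<le> q 0" for n using \<open>decseq q\<close> by (simp add: decseq_def)
  have bnd: "\<bar>(if k < N then a (n * m) k else 0)\<bar> \<le> 1 + q 0" for n k
  proof (cases "k < N")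
    case True
    have "\<bar>a (n * m) k\<bar> \<le> 1 + (a (n * m) k)^2" by (rule abs_le_sq)
    also have "(a (n * m) k)^2 \<le> q (n * m)" unfolding q_def by (rule ip_coord_le[OF True])
    also have "\<dots> \<le> q 0" by (rule qle)
    finally show ?thesis using True by simp
  next
    case False thus ?thesis using qnn[of 0] by simp
  qed
  obtain \<sigma> where \<sigma>: "strict_mono \<sigma>" "\<forall>k<N. convergent (\<lambda>l. if k < N then a (\<sigma> l * m) k else 0)"
    using bw_multi[of "\<lambda>n k. if k < N then a (n * m) k else 0" "1 + q 0" N] bnd by blast
  define astar where "astar k = lim (\<lambda>l. a (\<sigma> l * m) k)" for k
  have lim0: "(\<lambda>l. a (\<sigma> l * m) k) \<longlonglongrightarrow> astar k" if "k < N" for k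
    using \<sigma>(2) that unfolding astar_def by (simp add: convergent_LIMSEQ_iff)
  have smj: "strict_mono (\<lambda>l. \<sigma> l * m + j)" for j
    using \<sigma>(1) mpos unfolding strict_mono_def by simp
  have limj: "(\<lambda>l. a (\<sigma> l * m + j) k) \<longlonglongrightarrow> astar k" if "k < N" for j k
  proof (induction j)
    case 0 thus ?case using lim0[OF that] by simp
  next
    case (Suc j)
    have "(\<lambda>l. a (Suc (\<sigma> l * m + j)) k - a (\<sigma> l * m + j) k) \<longlonglongrightarrow> 0"
      using LIMSEQ_subseq_LIMSEQ[OF diff0[OF that] smj[of j]] by (simp add: o_def)
    from tendsto_add[OF Suc this] show ?case by simp
  qed
  have ip_lim: "(\<lambda>l. ip N (a (\<sigma> l * m + j)) w) \<longlonglongrightarrow> ip N astar w" for j w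
    unfolding ip_def by (intro tendsto_sum tendsto_mult tendsto_const limj) simp
  have F8: "ip N astar (Dvec d reg X i r h) = 0" if "j < m" "pair_list d R ! j = (i, r)" for j i r h
  proof -
    have "sched d R (\<sigma> l * m + j) = (i, r)" for l
      using that unfolding sched_def m_def[symmetric] by simp
    hence "ip N (a (\<sigma> l * m + Suc j)) (Dvec d reg X i r h) = 0" for l
      using orth_a by (metis add_Suc_right)
    hence "(\<lambda>l. ip N (a (\<sigma> l * m + Suc j)) (Dvec d reg X i r h)) = (\<lambda>l. 0)" by simp
    with ip_lim[of "Suc j" "Dvec d reg X i r h"] show ?thesis
      using LIMSEQ_unique tendsto_const by metis
  qed
  have F9: "ip N astar (gens ! j) = 0" if "j < length gens" for j
  proof -
    have "gens ! j \<in> set gens" using that by simp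
    then obtain i k0 where ik: "i < d" "k0 < N"
      "gens ! j = Dvec d reg X i (reg i (drop_coord d i (X k0))) (\<lambda>t. if t = X k0 i then 1 else 0)"
      using gens_set by blast
    have "(i, reg i (drop_coord d i (X k0))) \<in> set (pair_list d R)"
      using assms(3)[OF ik(1)] ik(1) pair_list_set by auto
    then obtain j' where "j' < m" "pair_list d R ! j' = (i, reg i (drop_coord d i (X k0)))"
      unfolding m_def by (metis in_set_conv_nth)
    thus ?thesis using F8 ik(3) by simp
  qed
  have F10: "ip N astar (a n) = 0" for n by (rule PERP[OF F9 a_infit])
  have "(\<lambda>l. ip N (a (\<sigma> l * m + 0)) astar) \<longlonglongrightarrow> ip N astar astar" by (rule ip_lim)
  moreover have "(\<lambda>l. ip N (a (\<sigma> l * m + 0)) astar) = (\<lambda>l. 0)"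
    using F10 by (simp add: ip_comm)
  ultimately have aa0: "ip N astar astar = 0" using LIMSEQ_unique tendsto_const by metis
  have "(\<lambda>l. q (\<sigma> l * m + 0)) \<longlonglongrightarrow> ip N astar astar"
    unfolding q_def ip_def by (intro tendsto_sum tendsto_mult limj) simp_all
  moreover have "(\<lambda>l. q (\<sigma> l * m + 0)) \<longlonglongrightarrow> L"
    using LIMSEQ_subseq_LIMSEQ[OF qL smj[of 0]] by (simp add: o_def)
  ultimately have L0: "L = 0" using aa0 LIMSEQ_unique by metis
  have "(\<lambda>n. emp_dist2 N X (calm_score d reg (fst (st n)) (snd (st n))) shat) = (\<lambda>n. (1 / real N) * q n)"
  proof
    fix n
    have "(\<Sum>k<N. (calm_score d reg (fst (st n)) (snd (st n)) (X k) - shat (X k))^2) = q n"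
      unfolding q_def ip_def a_def V_def shat_def using bfs by (intro sum.cong) (auto simp: power2_eq_square)
    thus "emp_dist2 N X (calm_score d reg (fst (st n)) (snd (st n))) shat = (1 / real N) * q n"
      unfolding emp_dist2_def by simp
  qed
  moreover have "(\<lambda>n. (1 / real N) * q n) \<longlonglongrightarrow> 0"
    using tendsto_mult[OF tendsto_const qL, of "1 / real N"] L0 by simp
  ultimately have conv: "(\<lambda>n. emp_dist2 N X (calm_score d reg (fst (st n)) (snd (st n))) shat) \<longlonglongrightarrow> 0"
    by simp
  show ?thesis using part1 shat_in shat_min conv uniq by blast
qed


end
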